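(* Let $\mathcal H$ be a separable complex Hilbert space, $A\in L(\mathcal H)^+$ and $T\in L(\mathcal H)$. Then $T$ is an $A$-projection if and only if $P_{\overline{R(A)}}T$ is idempotent (i.e. $(P_{\overline{R(A)}}T)^2=P_{\overline{R(A)}}T$) and $A$-selfadjoint.
   Context: $L(\mathcal H)^+$ denotes positive (semidefinite) bounded operators; $P_{\mathcal M}$ is the orthogonal projection onto a closed subspace $\mathcal M$. For $A\in L(\mathcal H)^+$, $\|x\|_A=\langle Ax,x\rangle^{1/2}$. An operator $C\in L(\mathcal H)$ is $A$-selfadjoint if $AC=C^*A$. $T$ is an $A$-projection if $\|y-Ty\|_A\le\|y-s\|_A$ for all $y\in\mathcal H$ and all $s\in\overline{R(T)}$. *)

theory Defs
  imports "HOL-Analysis.Analysis"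
begin

class complex_hilbert = real_normed_vector + complete_space +
  fixes scaleC :: "complex \<Rightarrow> 'a \<Rightarrow> 'a"
    and cinner :: "'a \<Rightarrow> 'a \<Rightarrow> complex"
  assumes scaleC_add_right: "scaleC a (x + y) = scaleC a x + scaleC a y"
    and scaleC_add_left: "scaleC (a + b) x = scaleC a x + scaleC b x"
    and scaleC_scaleC: "scaleC a (scaleC b x) = scaleC (a * b) x"
    and scaleC_one: "scaleC 1 x = x"
    and scaleR_scaleC: "scaleR r x = scaleC (complex_of_real r) x"
    and cinner_commute: "cinner x y = cnj (cinner y x)"
    and cinner_add_left: "cinner (x + y) z = cinner x z + cinner y z"
    and cinner_scaleC_left: "cinner (scaleC a x) y = a * cinner x y"
    and cinner_self_norm: "cinner x x = complex_of_real ((norm x)\<^sup>2)"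

definition separable_hilbert :: "'a::complex_hilbert itself \<Rightarrow> bool" where
  "separable_hilbert _ \<longleftrightarrow> (\<exists>D::'a set. countable D \<and> closure D = UNIV)"

definition bounded_clinear :: "('a::complex_hilbert \<Rightarrow> 'b::complex_hilbert) \<Rightarrow> bool" where
  "bounded_clinear f \<longleftrightarrow> bounded_linear f \<and> (\<forall>c x. f (scaleC c x) = scaleC c (f x))"

definition positive_op :: "('a::complex_hilbert \<Rightarrow> 'a) \<Rightarrow> bool" where
  "positive_op A \<longleftrightarrow> bounded_clinear A \<and>
     (\<forall>x. Im (cinner (A x) x) = 0 \<and> 0 \<le> Re (cinner (A x) x))"

definition adjoint :: "('a::complex_hilbert \<Rightarrow> 'a) \<Rightarrow> ('a \<Rightarrow> 'a)" where
  "adjoint C = (THE D. \<forall>x y. cinner (C x) y = cinner x (D y))"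

definition orth_proj :: "'a::complex_hilbert set \<Rightarrow> 'a \<Rightarrow> 'a" where
  "orth_proj M x = (THE y. y \<in> M \<and> (\<forall>m\<in>M. cinner (x - y) m = 0))"

definition A_norm :: "('a::complex_hilbert \<Rightarrow> 'a) \<Rightarrow> 'a \<Rightarrow> real" where
  "A_norm A x = sqrt (Re (cinner (A x) x))"

definition A_selfadjoint :: "('a::complex_hilbert \<Rightarrow> 'a) \<Rightarrow> ('a \<Rightarrow> 'a) \<Rightarrow> bool" where
  "A_selfadjoint A C \<longleftrightarrow> A \<circ> C = adjoint C \<circ> A"

definition A_projection :: "('a::complex_hilbert \<Rightarrow> 'a) \<Rightarrow> ('a \<Rightarrow> 'a) \<Rightarrow> bool" where
  "A_projection A T \<longleftrightarrow>
     (\<forall>y. \<forall>s \<in> closure (range T). A_norm A (y - T y) \<le> A_norm A (y - s))"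

end

theory Submission imports Defs begin



lemma cinner_zero_left[simp]:
  fixes x y z a0 b0 :: "'a::complex_hilbert"
  shows "cinner 0 y = 0"
  using cinner_add_left[of 0 0 y] by simp

lemma cinner_diff_left:
  fixes x y z a0 b0 :: "'a::complex_hilbert"
  shows "cinner (x - y) z = cinner x z - cinner y z"
proof -
  have "cinner ((x - y) + y) z = cinner (x - y) z + cinner y z" by (rule cinner_add_left)
  then show ?thesis by (simp add: eq_diff_eq)
qed

lemma cinner_neg_left:
  fixes x y z a0 b0 :: "'a::complex_hilbert"
  shows "cinner (- x) y = - cinner x y"
  using cinner_diff_left[of 0 x y] by simp

lemma cinner_zero_right[simp]:
  fixes x y z a0 b0 :: "'a::complex_hilbert"
  shows "cinner x 0 = 0"
  by (subst cinner_commute) simp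

lemma cinner_add_right:
  fixes x y z a0 b0 :: "'a::complex_hilbert"
  shows "cinner x (y + z) = cinner x y + cinner x z"
  by (subst (1 2 3) cinner_commute) (simp add: cinner_add_left)

lemma cinner_diff_right:
  fixes x y z a0 b0 :: "'a::complex_hilbert"
  shows "cinner x (y - z) = cinner x y - cinner x z"
  by (subst (1 2 3) cinner_commute) (simp add: cinner_diff_left)

lemma cinner_scaleC_right:
  fixes x y z a0 b0 :: "'a::complex_hilbert"
  shows "cinner x (scaleC a y) = cnj a * cinner x y"
  by (subst (1 2) cinner_commute) (simp add: cinner_scaleC_left)

lemma cinner_scaleR_left:
  fixes x y z a0 b0 :: "'a::complex_hilbert"
  shows "cinner (scaleR r x) y = complex_of_real r * cinner x y"
  by (simp add: scaleR_scaleC cinner_scaleC_left)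

lemma scaleC_zero_left[simp]:
  fixes x y z a0 b0 :: "'a::complex_hilbert"
  shows "scaleC 0 x = 0"
proof -
  have "scaleC (complex_of_real 0) x = 0 *\<^sub>R x" by (rule scaleR_scaleC[symmetric])
  then show ?thesis by simp
qed

lemma scaleC_zero_right[simp]:
  fixes x y z a0 b0 :: "'a::complex_hilbert"
  shows "scaleC a 0 = 0"
  using scaleC_add_right[of a 0 0] by simp

lemma scaleC_diff_right:
  fixes x y z a0 b0 :: "'a::complex_hilbert"
  shows "scaleC a (x - y) = scaleC a x - scaleC a y"
  using scaleC_add_right[of a "x - y" y] by (simp add: algebra_simps)

lemma scaleC_minus1:
  fixes x y z a0 b0 :: "'a::complex_hilbert"
  shows "scaleC (-1) x = - x"
proof -
  have "scaleC (complex_of_real (-1)) x = (-1) *\<^sub>R x" by (rule scaleR_scaleC[symmetric])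
  then show ?thesis by simp
qed

lemma cinner_self_Re:
  fixes x y z a0 b0 :: "'a::complex_hilbert"
  shows "Re (cinner x x) = (norm x)\<^sup>2"
  by (simp add: cinner_self_norm)

lemma cinner_self_eq0:
  fixes x y z a0 b0 :: "'a::complex_hilbert"
  shows "cinner x x = 0 \<longleftrightarrow> x = 0"
  by (simp add: cinner_self_norm)

lemma norm_scaleC:
  fixes x y z a0 b0 :: "'a::complex_hilbert"
  shows "norm (scaleC a x) = cmod a * norm x"
proof -
  have "cinner (scaleC a x) (scaleC a x) = a * cnj a * cinner x x"
    by (simp add: cinner_scaleC_left cinner_scaleC_right mult.assoc)
  also have "a * cnj a = complex_of_real ((cmod a)\<^sup>2)"
    using complex_norm_square[of a] by (simp add: of_real_power)
  finally have "complex_of_real ((norm (scaleC a x))\<^sup>2) = complex_of_real (((cmod a) * norm x)\<^sup>2)"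
    by (simp add: cinner_self_norm power_mult_distrib)
  then have "(norm (scaleC a x))\<^sup>2 = ((cmod a) * norm x)\<^sup>2"
    using of_real_eq_iff by blast
  then show ?thesis by (simp add: power2_eq_iff_nonneg)
qed

lemma bounded_linear_scaleC:
  fixes x y z a0 b0 :: "'a::complex_hilbert"
  shows "bounded_linear (scaleC a)"
proof (rule bounded_linear_intro[where K="cmod a"])
  show "scaleC a (x + y) = scaleC a x + scaleC a y" for x y by (rule scaleC_add_right)
  show "scaleC a (scaleR r x) = scaleR r (scaleC a x)" for r x
    by (simp add: scaleR_scaleC scaleC_scaleC mult.commute)
  show "norm (scaleC a x) \<le> norm x * cmod a" for x by (simp add: norm_scaleC)
qed

lemma norm_add_sq:
  fixes x y z a0 b0 :: "'a::complex_hilbert"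
  shows "(norm (x + y))\<^sup>2 = (norm x)\<^sup>2 + (norm y)\<^sup>2 + 2 * Re (cinner x y)"
proof -
  have "cinner (x+y) (x+y) = cinner x x + cinner y y + (cinner x y + cnj (cinner x y))"
    by (simp add: cinner_add_left cinner_add_right cinner_commute[of y x])
  then have "Re (cinner (x+y) (x+y)) = Re (cinner x x) + Re (cinner y y) + 2 * Re (cinner x y)"
    by simp
  then show ?thesis by (simp add: cinner_self_Re)
qed

lemma norm_diff_sq:
  fixes x y z a0 b0 :: "'a::complex_hilbert"
  shows "(norm (x - y))\<^sup>2 = (norm x)\<^sup>2 + (norm y)\<^sup>2 - 2 * Re (cinner x y)"
proof -
  have "Re (cinner x (-y)) = - Re (cinner x y)"
    by (subst (1 2) cinner_commute) (simp add: cinner_neg_left)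
  then show ?thesis using norm_add_sq[of x "-y"] by simp
qed

lemma cinner_polar:
  fixes x y z a0 b0 :: "'a::complex_hilbert"
  shows "cinner x y =
   complex_of_real (((norm (x + y))\<^sup>2 - (norm (x - y))\<^sup>2) / 4)
   + \<i> * complex_of_real (((norm (x + scaleC \<i> y))\<^sup>2 - (norm (x - scaleC \<i> y))\<^sup>2) / 4)"
proof -
  have 1: "((norm (x + y))\<^sup>2 - (norm (x - y))\<^sup>2) / 4 = Re (cinner x y)"
    by (simp add: norm_add_sq norm_diff_sq)
  have 2: "((norm (x + scaleC \<i> y))\<^sup>2 - (norm (x - scaleC \<i> y))\<^sup>2) / 4 = Im (cinner x y)"
    by (simp add: norm_add_sq norm_diff_sq cinner_scaleC_right)
  show ?thesis unfolding 1 2 by (simp add: complex_eq_iff)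
qed

lemma cinner_ext_left:
  fixes x y z a0 b0 :: "'a::complex_hilbert"
  shows "(\<And>w. cinner a w = cinner b w) \<Longrightarrow> a = b"
  by (metis cinner_diff_left cinner_self_eq0 diff_self eq_iff_diff_eq_0)

lemma tendsto_cinner[tendsto_intros]:
  fixes f g :: "_ \<Rightarrow> 'a::complex_hilbert"
  assumes "(f \<longlongrightarrow> a) F" "(g \<longlongrightarrow> b) F"
  shows "((\<lambda>t. cinner (f t) (g t)) \<longlongrightarrow> cinner a b) F"
proof -
  have s: "((\<lambda>t. scaleC \<i> (g t)) \<longlongrightarrow> scaleC \<i> b) F"
    using bounded_linear.tendsto[OF bounded_linear_scaleC assms(2)] .
  show ?thesis
    apply (subst (1 2) cinner_polar)
    by (intro tendsto_intros assms s) simp_all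
qed

lemma continuous_on_cinner[continuous_intros]:
  fixes f g :: "_ \<Rightarrow> 'a::complex_hilbert"
  assumes "continuous_on S f" "continuous_on S g"
  shows "continuous_on S (\<lambda>t. cinner (f t) (g t))"
  using assms unfolding continuous_on_def by (auto intro: tendsto_cinner)



definition csubspace :: "'a::complex_hilbert set \<Rightarrow> bool" where
  "csubspace M \<longleftrightarrow> 0 \<in> M \<and> (\<forall>x\<in>M. \<forall>y\<in>M. x + y \<in> M) \<and> (\<forall>c. \<forall>x\<in>M. scaleC c x \<in> M)"

lemma cinner_ext_right:
  fixes a b :: "'a::complex_hilbert"
  shows "(\<And>w. cinner w a = cinner w b) \<Longrightarrow> a = b"
  by (rule cinner_ext_left) (metis cinner_commute)

lemma csubspace_diff:
  fixes x y :: "'a::complex_hilbert"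
  assumes "csubspace M" "x \<in> M" "y \<in> M" shows "x - y \<in> M"
proof -
  have "scaleC (-1) y \<in> M" using assms unfolding csubspace_def by blast
  then have "x + scaleC (-1) y \<in> M" using assms unfolding csubspace_def by blast
  then show ?thesis by (simp add: scaleC_minus1)
qed

lemma csubspace_scaleR:
  fixes x :: "'a::complex_hilbert"
  assumes "csubspace M" "x \<in> M" shows "scaleR r x \<in> M"
  using assms unfolding csubspace_def by (simp add: scaleR_scaleC)

lemma csubspace_closure:
  fixes S :: "'a::complex_hilbert set"
  assumes "csubspace S" shows "csubspace (closure S)"
proof -
  have sc: "scaleC c ` closure S \<subseteq> closure S" for c
  proof (rule image_closure_subset)
    show "continuous_on (closure S) (scaleC c)"
      using bounded_linear_scaleC linear_continuous_on by blast
    show "scaleC c ` S \<subseteq> closure S" using assms closure_subset unfolding csubspace_def by blast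
  qed simp
  have ad1: "(\<lambda>x. x + s) ` closure S \<subseteq> closure S" if "s \<in> S" for s
  proof (rule image_closure_subset)
    show "continuous_on (closure S) (\<lambda>x. x + s)" by (intro continuous_intros)
    show "(\<lambda>x. x + s) ` S \<subseteq> closure S" using assms that closure_subset unfolding csubspace_def by blast
  qed simp
  have ad2: "(\<lambda>x. a + x) ` closure S \<subseteq> closure S" if "a \<in> closure S" for a
  proof (rule image_closure_subset)
    show "continuous_on (closure S) (\<lambda>x. a + x)" by (intro continuous_intros)
    show "(\<lambda>x. a + x) ` S \<subseteq> closure S" using ad1 that by (auto simp: add.commute)
  qed simp
  show ?thesis unfolding csubspace_def
    using sc ad2 assms closure_subset unfolding csubspace_def by blast
qed

lemma bcl_linear: "bounded_clinear f \<Longrightarrow> linear f"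
  unfolding bounded_clinear_def using bounded_linear.linear by blast
lemma bcl_add: "bounded_clinear f \<Longrightarrow> f (x + y) = f x + f y"
  using bcl_linear linear_add by blast
lemma bcl_diff: "bounded_clinear f \<Longrightarrow> f (x - y) = f x - f y"
  using bcl_linear linear_diff by blast
lemma bcl_zero: "bounded_clinear f \<Longrightarrow> f 0 = 0"
  using bcl_linear linear_0 by blast
lemma bcl_scaleC: "bounded_clinear f \<Longrightarrow> f (scaleC c x) = scaleC c (f x)"
  unfolding bounded_clinear_def by blast
lemma bcl_cont: "bounded_clinear f \<Longrightarrow> continuous_on S f"
  unfolding bounded_clinear_def using linear_continuous_on by blast

lemma csubspace_range:
  fixes f :: "'a::complex_hilbert \<Rightarrow> 'a"
  assumes "bounded_clinear f" shows "csubspace (range f)"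
proof -
  have "0 \<in> range f" using bcl_zero[OF assms] by (metis rangeI)
  moreover have "x + y \<in> range f" if xy: "x \<in> range f" "y \<in> range f" for x y
  proof -
    obtain u v where "x = f u" "y = f v" using xy by blast
    then have "x + y = f (u + v)" by (simp add: bcl_add[OF assms])
    then show ?thesis by simp
  qed
  moreover have "scaleC c x \<in> range f" if xr: "x \<in> range f" for c x
  proof -
    obtain u where "x = f u" using xr by blast
    then have "scaleC c x = f (scaleC c u)" by (simp add: bcl_scaleC[OF assms])
    then show ?thesis by simp
  qed
  ultimately show ?thesis unfolding csubspace_def by blast
qed

lemma var_lemma:
  fixes a :: complex and b :: real
  assumes b: "0 \<le> b" and H: "\<And>t. 0 \<le> b * (cmod t)\<^sup>2 - 2 * Re (cnj t * a)"
  shows "a = 0"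
proof -
  define t where "t = a / complex_of_real (b + 1)"
  have bp: "0 < b + 1" using b by simp
  have ca: "Re a * Re a + Im a * Im a = cmod a * cmod a"
    using cmod_power2[of a] by (simp add: power2_eq_square)
  have r: "Re (cnj t * a) = (cmod a)\<^sup>2 / (b + 1)"
    unfolding t_def using bp
    by (simp add: ca power2_eq_square mult.commute[of "cnj a"] Re_divide_of_real)
  have c: "(cmod t)\<^sup>2 = (cmod a)\<^sup>2 / (b + 1)\<^sup>2"
    unfolding t_def using bp by (simp add: norm_divide power_divide)
  define q where "q = (cmod a)\<^sup>2"
  define s where "s = b + 1"
  have sp: "0 < s" using bp unfolding s_def .
  have h: "0 \<le> b * (q / s\<^sup>2) - 2 * (q / s)"
    using H[of t] unfolding r c q_def s_def .
  have "0 \<le> (b * (q / s\<^sup>2) - 2 * (q / s)) * s\<^sup>2"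
    using h by simp
  also have "\<dots> = b * q - 2 * q * s"
    using sp by (simp add: field_simps power2_eq_square)
  finally have "0 \<le> b * (cmod a)\<^sup>2 - 2 * (b+1) * (cmod a)\<^sup>2"
    unfolding q_def s_def by (simp add: algebra_simps)
  then have "(b + 2) * (cmod a)\<^sup>2 \<le> 0" by (simp add: algebra_simps)
  moreover have "0 < b + 2" using b by simp
  ultimately have "(cmod a)\<^sup>2 \<le> 0"
    by (smt (verit) mult_le_0_iff)
  then show ?thesis by simp
qed

lemma proj_minimizer:
  fixes x :: "'a::complex_hilbert"
  assumes cl: "closed M" and sub: "csubspace M"
  shows "\<exists>y\<in>M. \<forall>m\<in>M. norm (x - y) \<le> norm (x - m)"
proof -
  define D where "D = (\<lambda>m. (norm (x - m))\<^sup>2) ` M"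
  define d where "d = Inf D"
  have ne: "D \<noteq> {}" using sub unfolding D_def csubspace_def by blast
  have bb: "bdd_below D" unfolding D_def by (rule bdd_belowI[of _ 0]) auto
  have dle: "d \<le> (norm (x - m))\<^sup>2" if "m \<in> M" for m
    unfolding d_def using bb that unfolding D_def by (auto intro: cInf_lower)
  have "\<exists>m\<in>M. (norm (x - m))\<^sup>2 < d + inverse (real (Suc n))" for n
  proof -
    have "d < d + inverse (real (Suc n))" by simp
    then obtain z where "z \<in> D" "z < d + inverse (real (Suc n))"
      using cInf_less_iff[OF ne bb] unfolding d_def by blast
    then show ?thesis unfolding D_def by blast
  qed
  then obtain mm where mm: "\<And>n. mm n \<in> M" "\<And>n. (norm (x - mm n))\<^sup>2 < d + inverse (real (Suc n))"
    by metis
  have par: "(norm (mm i - mm j))\<^sup>2 \<le> 2 * inverse (real (Suc i)) + 2 * inverse (real (Suc j))" for i j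
  proof -
    define a where "a = x - mm i"
    define b where "b = x - mm j"
    define mid where "mid = scaleR (1/2) (mm i + mm j)"
    have midM: "mid \<in> M" unfolding mid_def
      using sub mm(1) csubspace_scaleR unfolding csubspace_def by blast
    have pl: "(norm (a + b))\<^sup>2 + (norm (a - b))\<^sup>2 = 2 * (norm a)\<^sup>2 + 2 * (norm b)\<^sup>2"
      by (simp add: norm_add_sq norm_diff_sq)
    have ab: "a + b = scaleR 2 (x - mid)" unfolding a_def b_def mid_def
      by (simp add: algebra_simps scaleR_2)
    have "(norm (a + b))\<^sup>2 = 4 * (norm (x - mid))\<^sup>2" unfolding ab
      by (simp add: power2_eq_square)
    then have "4 * d \<le> (norm (a + b))\<^sup>2" using dle[OF midM] by simp
    moreover have "(norm (a - b))\<^sup>2 = (norm (mm i - mm j))\<^sup>2" unfolding a_def b_def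
      by (metis diff_diff_eq2 diff_add_cancel add_diff_cancel_left' norm_minus_commute)
    moreover have "(norm a)\<^sup>2 < d + inverse (real (Suc i))" unfolding a_def by (rule mm(2))
    moreover have "(norm b)\<^sup>2 < d + inverse (real (Suc j))" unfolding b_def by (rule mm(2))
    ultimately show ?thesis using pl by linarith
  qed
  have "Cauchy mm"
  proof (rule CauchyI)
    fix e :: real assume e: "0 < e"
    obtain N :: nat where N: "4 / e\<^sup>2 < real N" using reals_Archimedean2 by blast
    have "\<forall>i\<ge>N. \<forall>j\<ge>N. norm (mm i - mm j) < e"
    proof (intro allI impI)
      fix i j assume ij: "N \<le> i" "N \<le> j"
      have e2: "0 < e\<^sup>2" using e by simp
      have iN: "inverse (real (Suc i)) \<le> inverse (real (Suc N))"
        using ij by (simp add: le_imp_inverse_le)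
      have jN: "inverse (real (Suc j)) \<le> inverse (real (Suc N))"
        using ij by (simp add: le_imp_inverse_le)
      have "4 < e\<^sup>2 * real N" using N e2 by (simp add: field_simps)
      moreover have "e\<^sup>2 * real (Suc N) = e\<^sup>2 * real N + e\<^sup>2" by (simp add: algebra_simps)
      ultimately have "4 < e\<^sup>2 * real (Suc N)" using e2 by linarith
      then have "4 * inverse (real (Suc N)) < e\<^sup>2"
        by (simp add: field_simps)
      then have "(norm (mm i - mm j))\<^sup>2 < e\<^sup>2" using par[of i j] iN jN by linarith
      then show "norm (mm i - mm j) < e" using e by (simp add: power_less_imp_less_base)
    qed
    then show "\<exists>M. \<forall>m\<ge>M. \<forall>n\<ge>M. norm (mm m - mm n) < e" by blast
  qed
  then obtain y where y: "mm \<longlonglongrightarrow> y" using Cauchy_convergent_iff convergent_def by blast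
  have yM: "y \<in> M" using cl mm(1) y closed_sequentially by blast
  have l1: "(\<lambda>n. (norm (x - mm n))\<^sup>2) \<longlonglongrightarrow> (norm (x - y))\<^sup>2"
    by (intro tendsto_intros y)
  have l2: "(\<lambda>n. d + inverse (real (Suc n))) \<longlonglongrightarrow> d"
    using tendsto_add[OF tendsto_const LIMSEQ_inverse_real_of_nat, of d] by simp
  have "(norm (x - y))\<^sup>2 \<le> d"
  proof -
    have ev: "\<forall>n. (norm (x - mm n))\<^sup>2 \<le> d + inverse (real (Suc n))"
      using mm(2) less_imp_le by blast
    show ?thesis using tendsto_le[OF trivial_limit_sequentially l2 l1 always_eventually[OF ev]] .
  qed
  then have "\<forall>m\<in>M. norm (x - y) \<le> norm (x - m)"
    using dle by (meson order_trans power2_le_imp_le norm_ge_zero)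
  then show ?thesis using yM by blast
qed

lemma proj_exists:
  fixes x :: "'a::complex_hilbert"
  assumes cl: "closed M" and sub: "csubspace M"
  shows "\<exists>y\<in>M. \<forall>m\<in>M. cinner (x - y) m = 0"
proof -
  obtain y where yM: "y \<in> M" and ymin: "\<And>m. m \<in> M \<Longrightarrow> norm (x - y) \<le> norm (x - m)"
    using proj_minimizer[OF assms] by blast
  have "cinner (x - y) m = 0" if mM: "m \<in> M" for m
  proof (rule var_lemma[where b="(norm m)\<^sup>2"])
    fix t
    have "y + scaleC t m \<in> M" using sub yM mM unfolding csubspace_def by blast
    then have "norm (x - y) \<le> norm ((x - y) - scaleC t m)"
      using ymin by (metis diff_diff_eq)
    then have "(norm (x - y))\<^sup>2 \<le> (norm ((x - y) - scaleC t m))\<^sup>2"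
      by (simp add: power_mono)
    also have "\<dots> = (norm (x - y))\<^sup>2 + (cmod t)\<^sup>2 * (norm m)\<^sup>2 - 2 * Re (cnj t * cinner (x - y) m)"
      by (simp add: norm_diff_sq norm_scaleC cinner_scaleC_right power_mult_distrib)
    finally show "0 \<le> (norm m)\<^sup>2 * (cmod t)\<^sup>2 - 2 * Re (cnj t * cinner (x - y) m)"
      by (simp add: mult.commute)
  qed simp
  then show ?thesis using yM by blast
qed

lemma orth_proj_props:
  fixes x :: "'a::complex_hilbert"
  assumes cl: "closed M" and sub: "csubspace M"
  shows "orth_proj M x \<in> M \<and> (\<forall>m\<in>M. cinner (x - orth_proj M x) m = 0)"
proof -
  have ex1: "\<exists>!y. y \<in> M \<and> (\<forall>m\<in>M. cinner (x - y) m = 0)"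
  proof -
    obtain y where y: "y \<in> M" "\<forall>m\<in>M. cinner (x - y) m = 0" using proj_exists[OF assms] by blast
    moreover have "z = y" if z: "z \<in> M" "\<forall>m\<in>M. cinner (x - z) m = 0" for z
    proof -
      have dM: "z - y \<in> M" using csubspace_diff[OF sub] y z by blast
      have "cinner (z - y) (z - y) = cinner (x - y) (z - y) - cinner (x - z) (z - y)"
        by (metis cinner_diff_left diff_diff_eq2 diff_add_cancel add_diff_cancel_left')
      also have "\<dots> = 0" using y z dM by simp
      finally show ?thesis by (simp add: cinner_self_eq0)
    qed
    ultimately show ?thesis by blast
  qed
  show ?thesis unfolding orth_proj_def using theI'[OF ex1] by blast
qed

lemma riesz:
  fixes f :: "'a::complex_hilbert \<Rightarrow> complex"
  assumes cont: "continuous_on UNIV f"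
    and add: "\<And>x y. f (x + y) = f x + f y"
    and hom: "\<And>c x. f (scaleC c x) = c * f x"
  shows "\<exists>z. \<forall>x. f x = cinner x z"
proof (cases "\<forall>x. f x = 0")
  case True then show ?thesis by (intro exI[of _ 0]) simp
next
  case False
  then obtain u where u: "f u \<noteq> 0" by blast
  have f0: "f 0 = 0" using add[of 0 0] by simp
  have fdiff: "f (x - y) = f x - f y" for x y using add[of "x - y" y] by simp
  define N where "N = {x. f x = 0}"
  have clN: "closed N" unfolding N_def
    by (rule closed_Collect_eq[OF cont continuous_on_const])
  have subN: "csubspace N" unfolding N_def csubspace_def using f0 add hom by simp
  obtain y where yN: "y \<in> N" and yo: "\<forall>m\<in>N. cinner (u - y) m = 0"
    using proj_exists[OF clN subN] by blast
  define v where "v = u - y"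
  have fv: "f v = f u" unfolding v_def using fdiff yN unfolding N_def by simp
  have v0: "v \<noteq> 0" using fv u f0 by auto
  have nv: "cinner v v \<noteq> 0" using v0 cinner_self_eq0 by blast
  define z where "z = scaleC (cnj (f v / cinner v v)) v"
  have "f x = cinner x z" for x
  proof -
    define w where "w = scaleC (f x) v - scaleC (f v) x"
    have "f w = 0" unfolding w_def using fdiff hom by (simp add: mult.commute)
    then have "cinner v w = 0" using yo unfolding N_def v_def by simp
    then have "cinner w v = 0" by (metis cinner_commute complex_cnj_zero)
    then have "f x * cinner v v - f v * cinner x v = 0"
      unfolding w_def by (simp add: cinner_diff_left cinner_scaleC_left)
    then have "f x = f v * cinner x v / cinner v v" using nv by (simp add: field_simps)
    also have "\<dots> = cinner x z" unfolding z_def by (simp add: cinner_scaleC_right)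
    finally show ?thesis .
  qed
  then show ?thesis by blast
qed

lemma adjoint_exists:
  fixes C :: "'a::complex_hilbert \<Rightarrow> 'a"
  assumes "bounded_clinear C"
  shows "\<exists>D. \<forall>x y. cinner (C x) y = cinner x (D y)"
proof -
  have "\<forall>y. \<exists>z. \<forall>x. cinner (C x) y = cinner x z"
  proof
    fix y
    show "\<exists>z. \<forall>x. cinner (C x) y = cinner x z"
    proof (rule riesz)
      show "continuous_on UNIV (\<lambda>x. cinner (C x) y)"
        by (intro continuous_intros bcl_cont[OF assms])
      show "cinner (C (x + x')) y = cinner (C x) y + cinner (C x') y" for x x'
        by (simp add: bcl_add[OF assms] cinner_add_left)
      show "cinner (C (scaleC c x)) y = c * cinner (C x) y" for c x
        by (simp add: bcl_scaleC[OF assms] cinner_scaleC_left)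
    qed
  qed
  then show ?thesis by metis
qed

lemma adjoint_eq:
  fixes C D :: "'a::complex_hilbert \<Rightarrow> 'a"
  assumes "\<And>x y. cinner (C x) y = cinner x (D y)"
  shows "Defs.adjoint C = D"
  unfolding Defs.adjoint_def
proof (rule the_equality)
  show "\<forall>x y. cinner (C x) y = cinner x (D y)" using assms by blast
  fix D' assume "\<forall>x y. cinner (C x) y = cinner x (D' y)"
  then show "D' = D" using assms by (metis cinner_ext_right ext)
qed

lemma positive_herm:
  fixes A :: "'a::complex_hilbert \<Rightarrow> 'a"
  assumes pos: "positive_op A"
  shows "cinner (A x) y = cinner x (A y)"
proof -
  have bcl: "bounded_clinear A" using pos unfolding positive_op_def by blast
  have im: "Im (cinner (A u) u) = 0" for u using pos unfolding positive_op_def by blast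
  have e1: "cinner (A (x + y)) (x + y) = cinner (A x) x + cinner (A y) y + cinner (A x) y + cinner (A y) x"
    by (simp add: bcl_add[OF bcl] cinner_add_left cinner_add_right)
  have e2: "cinner (A (x + scaleC \<i> y)) (x + scaleC \<i> y) =
     cinner (A x) x + cinner (A y) y - \<i> * cinner (A x) y + \<i> * cinner (A y) x"
    by (simp add: bcl_add[OF bcl] bcl_scaleC[OF bcl] cinner_add_left cinner_add_right
        cinner_scaleC_left cinner_scaleC_right algebra_simps)
  have i1: "Im (cinner (A x) y) + Im (cinner (A y) x) = 0"
    using im[of "x + y"] im[of x] im[of y] unfolding e1 by simp
  have i2: "- Re (cinner (A x) y) + Re (cinner (A y) x) = 0"
    using im[of "x + scaleC \<i> y"] im[of x] im[of y] unfolding e2 by simp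
  have "cinner (A x) y = cnj (cinner (A y) x)"
    using i1 i2 by (simp add: complex_eq_iff)
  also have "\<dots> = cinner x (A y)" by (metis cinner_commute)
  finally show ?thesis .
qed


lemma expand:
  fixes A :: "'a::complex_hilbert \<Rightarrow> 'a"
  assumes pos: "positive_op A"
  shows "Re (cinner (A (e - scaleC t s)) (e - scaleC t s)) =
    Re (cinner (A e) e) + (cmod t)\<^sup>2 * Re (cinner (A s) s) - 2 * Re (cnj t * cinner (A e) s)"
proof -
  have bcl: "bounded_clinear A" using pos unfolding positive_op_def by blast
  have 1: "cinner (A (e - scaleC t s)) (e - scaleC t s) = cinner (A e) e - cnj t * cinner (A e) s
     - t * cinner (A s) e + t * cnj t * cinner (A s) s"
    by (simp add: bcl_diff[OF bcl] bcl_scaleC[OF bcl] cinner_diff_left cinner_diff_right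
        cinner_scaleC_left cinner_scaleC_right algebra_simps)
  have 2: "cinner (A s) e = cnj (cinner (A e) s)"
    using positive_herm[OF pos, of s e] by (metis cinner_commute)
  have 3: "Re (t * cnj (cinner (A e) s)) = Re (cnj t * cinner (A e) s)"
  proof -
    have "t * cnj (cinner (A e) s) = cnj (cnj t * cinner (A e) s)" by simp
    then show ?thesis by simp
  qed
  have 4: "t * cnj t = complex_of_real ((cmod t)\<^sup>2)"
    using complex_norm_square[of t] by (simp add: of_real_power)
  show ?thesis unfolding 1 2 using 3 by (simp add: 4)
qed

lemma A_norm_mono:
  fixes A :: "'a::complex_hilbert \<Rightarrow> 'a"
  assumes "positive_op A"
  shows "A_norm A u \<le> A_norm A v \<longleftrightarrow> Re (cinner (A u) u) \<le> Re (cinner (A v) v)"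
  using assms unfolding A_norm_def positive_op_def by simp

theorem mainTheorem3:
  fixes A T :: "'a::complex_hilbert \<Rightarrow> 'a"
  assumes "separable_hilbert TYPE('a)"
    and "positive_op A"
    and "bounded_clinear T"
  shows "A_projection A T \<longleftrightarrow>
           ((orth_proj (closure (range A)) \<circ> T) \<circ> (orth_proj (closure (range A)) \<circ> T)
              = orth_proj (closure (range A)) \<circ> T
            \<and> A_selfadjoint A (orth_proj (closure (range A)) \<circ> T))"
proof -
  note pos = assms(2) and bT = assms(3)
  have bA: "bounded_clinear A" using pos unfolding positive_op_def by blast
  have herm: "cinner (A x) y = cinner x (A y)" for x y using positive_herm[OF pos] .
  have Apos: "0 \<le> Re (cinner (A x) x)" for x using pos unfolding positive_op_def by blast
  define M where "M = closure (range A)"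
  define P where "P = orth_proj M"
  have Mcl: "closed M" unfolding M_def by simp
  have Msub: "csubspace M" unfolding M_def by (intro csubspace_closure csubspace_range bA)
  have PM: "P x \<in> M" for x using orth_proj_props[OF Mcl Msub] unfolding P_def by blast
  have Po: "m \<in> M \<Longrightarrow> cinner (x - P x) m = 0" for x m
    using orth_proj_props[OF Mcl Msub] unfolding P_def by blast
  have AM: "A x \<in> M" for x unfolding M_def by (rule subsetD[OF closure_subset]) simp
  have mP: "m \<in> M \<Longrightarrow> cinner m (P v) = cinner m v" for m v
  proof -
    assume m: "m \<in> M"
    have "cinner m (v - P v) = cnj (cinner (v - P v) m)" by (rule cinner_commute)
    also have "\<dots> = 0" using Po[OF m] by simp
    finally show ?thesis by (simp add: cinner_diff_right)
  qed
  have AP: "A (P x) = A x" for x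
  proof (rule cinner_ext_left)
    fix w
    have "cinner (A (P x)) w = cinner (P x) (A w)" by (rule herm)
    also have "\<dots> = cinner x (A w)"
      using Po[OF AM, of x w] by (simp add: cinner_diff_left)
    also have "\<dots> = cinner (A x) w" by (rule herm[symmetric])
    finally show "cinner (A (P x)) w = cinner (A x) w" .
  qed
  have Pself: "cinner (P a) b = cinner a (P b)" for a b
  proof -
    have "cinner (P a) b = cinner (P a) (P b)" using mP[OF PM] by simp
    moreover have "cinner a (P b) = cinner (P a) (P b)"
      using Po[OF PM, of a b] by (simp add: cinner_diff_left)
    ultimately show ?thesis by simp
  qed
  obtain Ts where Ts: "\<And>x y. cinner (T x) y = cinner x (Ts y)" using adjoint_exists[OF bT] by blast
  have adjQ: "Defs.adjoint (P \<circ> T) = Ts \<circ> P"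
    by (rule adjoint_eq) (simp add: Pself Ts)
  have key: "cinner (Ts (P (A u))) v = cinner (A u) (P (T v))" for u v
  proof -
    have "cinner (Ts (P (A u))) v = cnj (cinner v (Ts (P (A u))))" by (rule cinner_commute)
    also have "\<dots> = cnj (cinner (T v) (P (A u)))" by (simp add: Ts)
    also have "\<dots> = cnj (cinner (P (T v)) (A u))" by (simp add: Pself)
    also have "\<dots> = cinner (A u) (P (T v))" by (metis cinner_commute)
    finally show ?thesis .
  qed
  have SAiff: "A_selfadjoint A (P \<circ> T) \<longleftrightarrow> (\<forall>u v. cinner (A (T u)) v = cinner (A u) (T v))"
  proof
    assume "A_selfadjoint A (P \<circ> T)"
    then have e: "A (P (T u)) = Ts (P (A u))" for u
      unfolding A_selfadjoint_def adjQ by (metis comp_apply)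
    show "\<forall>u v. cinner (A (T u)) v = cinner (A u) (T v)"
    proof (intro allI)
      fix u v
      have "cinner (A (T u)) v = cinner (A (P (T u))) v" by (simp add: AP)
      also have "\<dots> = cinner (A u) (P (T v))" unfolding e by (rule key)
      also have "\<dots> = cinner (A u) (T v)" by (rule mP[OF AM])
      finally show "cinner (A (T u)) v = cinner (A u) (T v)" .
    qed
  next
    assume K: "\<forall>u v. cinner (A (T u)) v = cinner (A u) (T v)"
    have "A (P (T u)) = Ts (P (A u))" for u
    proof (rule cinner_ext_left)
      fix v
      show "cinner (A (P (T u))) v = cinner (Ts (P (A u))) v"
        unfolding key AP using K mP[OF AM] by simp
    qed
    then show "A_selfadjoint A (P \<circ> T)" unfolding A_selfadjoint_def adjQ by (simp add: fun_eq_iff)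
  qed
  have ATP: "A (T (P u)) = A (T u)" if K: "\<forall>u v. cinner (A (T u)) v = cinner (A u) (T v)" for u
  proof (rule cinner_ext_left)
    fix w
    show "cinner (A (T (P u))) w = cinner (A (T u)) w" using K by (simp add: AP)
  qed
  have zero: "z = 0" if "z \<in> M" "A z = 0" for z
  proof -
    have "range A \<subseteq> {m. cinner z m = 0}"
    proof
      fix m assume "m \<in> range A"
      then obtain v where "m = A v" by blast
      then show "m \<in> {m. cinner z m = 0}" using that herm[of z v, symmetric] by simp
    qed
    moreover have "closed {m. cinner z m = 0}"
      by (intro closed_Collect_eq continuous_intros)
    ultimately have "M \<subseteq> {m. cinner z m = 0}" unfolding M_def by (rule closure_minimal)
    then have "cinner z z = 0" using that by blast
    then show ?thesis by (simp add: cinner_self_eq0)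
  qed
  have idem_iff: "(P \<circ> T) \<circ> (P \<circ> T) = P \<circ> T \<longleftrightarrow> (\<forall>x. P (T (P (T x))) = P (T x))"
    by (simp add: fun_eq_iff)
  show ?thesis
    unfolding M_def[symmetric] P_def[symmetric] SAiff idem_iff
  proof
    assume proj: "A_projection A T"
    have O: "cinner (A (y - T y)) (T w) = 0" for y w
    proof (rule var_lemma[where b="Re (cinner (A (T w)) (T w))"])
      fix t
      have "T y + scaleC t (T w) = T (y + scaleC t w)" by (simp add: bcl_add[OF bT] bcl_scaleC[OF bT])
      then have "T y + scaleC t (T w) \<in> closure (range T)"
        by (intro subsetD[OF closure_subset]) simp
      then have "A_norm A (y - T y) \<le> A_norm A (y - (T y + scaleC t (T w)))"
        using proj unfolding A_projection_def by blast
      then have "Re (cinner (A (y - T y)) (y - T y)) \<le>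
          Re (cinner (A ((y - T y) - scaleC t (T w))) ((y - T y) - scaleC t (T w)))"
        using A_norm_mono[OF pos] by (simp add: diff_diff_eq)
      then show "0 \<le> Re (cinner (A (T w)) (T w)) * (cmod t)\<^sup>2 - 2 * Re (cnj t * cinner (A (y - T y)) (T w))"
        unfolding expand[OF pos] by (simp add: mult.commute)
    qed (rule Apos)
    have O': "cinner (A y) (T w) = cinner (A (T y)) (T w)" for y w
      using O[of y w] by (simp add: bcl_diff[OF bA] cinner_diff_left)
    have K: "cinner (A (T y)) w = cinner (A y) (T w)" for y w
    proof -
      have "cinner (A y) (T w) = cinner (A (T y)) (T w)" by (rule O')
      also have "\<dots> = cinner (T y) (A (T w))" by (rule herm)
      also have "\<dots> = cnj (cinner (A (T w)) (T y))" by (rule cinner_commute)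
      also have "\<dots> = cnj (cinner (A w) (T y))" by (simp only: O'[of w y])
      also have "\<dots> = cinner (T y) (A w)" by (metis cinner_commute)
      also have "\<dots> = cinner (A (T y)) w" by (rule herm[symmetric])
      finally show ?thesis by simp
    qed
    then have Kall: "\<forall>u v. cinner (A (T u)) v = cinner (A u) (T v)" by blast
    have ATT: "A (T (T x)) = A (T x)" for x
    proof (rule cinner_ext_left)
      fix w
      have "cinner (A (T (T x))) w = cinner (A (T x)) (T w)" by (rule K)
      also have "\<dots> = cinner (A x) (T w)" by (rule O'[symmetric])
      also have "\<dots> = cinner (A (T x)) w" by (rule K[symmetric])
      finally show "cinner (A (T (T x))) w = cinner (A (T x)) w" .
    qed
    have "P (T (P (T x))) = P (T x)" for x
    proof -
      have "P (T (P (T x))) - P (T x) \<in> M" using csubspace_diff[OF Msub PM PM] .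
      moreover have "A (P (T (P (T x))) - P (T x)) = 0"
        by (simp add: bcl_diff[OF bA] AP ATP[OF Kall] ATT)
      ultimately have "P (T (P (T x))) - P (T x) = 0" by (rule zero)
      then show ?thesis by simp
    qed
    then show "(\<forall>x. P (T (P (T x))) = P (T x)) \<and> (\<forall>u v. cinner (A (T u)) v = cinner (A u) (T v))"
      using Kall by blast
  next
    assume H: "(\<forall>x. P (T (P (T x))) = P (T x)) \<and> (\<forall>u v. cinner (A (T u)) v = cinner (A u) (T v))"
    then have idem: "P (T (P (T x))) = P (T x)" for x by blast
    have Kall: "\<forall>u v. cinner (A (T u)) v = cinner (A u) (T v)" using H by blast
    have ATT: "A (T (T x)) = A (T x)" for x
    proof -
      have "A (T (T x)) = A (T (P (T x)))" by (simp add: ATP[OF Kall])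
      also have "\<dots> = A (P (T (P (T x))))" by (simp add: AP)
      also have "\<dots> = A (T x)" by (simp add: idem AP)
      finally show ?thesis .
    qed
    have O: "cinner (A (y - T y)) (T w) = 0" for y w
    proof -
      have "cinner (A (y - T y)) (T w) = cinner (A (T (y - T y))) w" using Kall by simp
      also have "\<dots> = 0" by (simp add: bcl_diff[OF bT] bcl_diff[OF bA] ATT)
      finally show ?thesis .
    qed
    have rng: "A_norm A (y - T y) \<le> A_norm A (y - T t)" for y t
    proof -
      have eq: "y - T t = (y - T y) - scaleC 1 (T (t - y))"
        by (simp add: scaleC_one bcl_diff[OF bT])
      have "Re (cinner (A (y - T y)) (y - T y)) \<le> Re (cinner (A (y - T t)) (y - T t))"
        unfolding eq expand[OF pos] using O[of y "t - y"] Apos[of "T (t - y)"] by simp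
      then show ?thesis using A_norm_mono[OF pos] by blast
    qed
    show "A_projection A T" unfolding A_projection_def
    proof (intro allI ballI)
      fix y s assume s: "s \<in> closure (range T)"
      have "range T \<subseteq> {s. A_norm A (y - T y) \<le> A_norm A (y - s)}" using rng by blast
      moreover have "closed {s. A_norm A (y - T y) \<le> A_norm A (y - s)}"
        unfolding A_norm_def bcl_diff[OF bA]
        by (intro closed_Collect_le continuous_intros bcl_cont[OF bA])
      ultimately have "closure (range T) \<subseteq> {s. A_norm A (y - T y) \<le> A_norm A (y - s)}"
        by (rule closure_minimal)
      then show "A_norm A (y - T y) \<le> A_norm A (y - s)" using s by blast
    qed
  qed
qed

end
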